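(* Regard the sequence $(c_n)_{n\ge0}$ (with values in $\{0,1\}$) as integers and let $C(X)=\sum_{n\ge0}c_nX^n\in\mathbb{C}[[X]]$. Then $C$ satisfies the functional equation $$C(X)=X(X+1)+\frac{X^3(X^4-1)}{(X-1)(X^4+1)}\,C(X^4).$$ Moreover, $C(X)$ is transcendental over $\mathbb{C}(X)$.
   Context: For $n\in\mathbb{N}$ let $s_2(n)$ be the sum of the binary digits of $n$ and $t_n=s_2(n)\bmod 2$ (the Prouhet–Thue–Morse sequence). Let $F(X)=\sum_{n\ge1}t_nX^n\in\mathbb{F}_2[[X]]$ and let $G(X)=\sum_{n\ge1}c_nX^n\in\mathbb{F}_2[[X]]$ be its compositional inverse, i.e. $F(G(X))=G(F(X))=X$; set $c_0=0$. Each $c_n$ is identified with the integer $0$ or $1$. *)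

theory Defs
  imports "HOL-Computational_Algebra.Computational_Algebra" "HOL-Library.Z2"
begin

fun s2 :: "nat \<Rightarrow> nat" where
  "s2 n = (if n = 0 then 0 else n mod 2 + s2 (n div 2))"

definition ptm :: "nat \<Rightarrow> bit" where
  "ptm n = of_nat (s2 n mod 2)"

definition F_ptm :: "bit fps" where
  "F_ptm = Abs_fps (\<lambda>n. if n = 0 then 0 else ptm n)"

text \<open>G = compositional inverse of F (F has F$0 = 0, F$1 = 1).\<close>
definition G_ptm :: "bit fps" where
  "G_ptm = fps_inv F_ptm"

definition c_ptm :: "nat \<Rightarrow> complex" where
  "c_ptm n = (if n = 0 then 0 else if G_ptm $ n = 1 then 1 else 0)"

definition C_ptm :: "complex fps" where
  "C_ptm = Abs_fps c_ptm"

text \<open>A formal power series f is algebraic over C(X) iff there is a nonzero polynomial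
  P(Y) with coefficients in C[X] (equivalently, after clearing denominators, in C(X))
  such that P(f) = 0.\<close>
definition fps_algebraic_over_rat_funs :: "complex fps \<Rightarrow> bool" where
  "fps_algebraic_over_rat_funs f \<longleftrightarrow>
     (\<exists>p :: complex poly poly. p \<noteq> 0 \<and> poly (map_poly fps_of_poly p) f = 0)"

end

theory Submission
  imports Defs
begin


fun kap :: "nat \<Rightarrow> bool" where
  "kap q = (if q = 0 then True else ((q mod 4 = 0 \<or> q mod 4 = 2) \<and> kap (q div 4)))"

declare kap.simps[simp del]

lemma kap_0[simp]: "kap 0" by (simp add: kap.simps)

lemma kap_4: "r < 4 \<Longrightarrow> kap (4*s + r) = (if r = 0 then kap s else if r = 2 then kap s else False)"
  by (subst kap.simps) auto

lemma kap_step: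
  assumes "q \<ge> 1"
  shows "of_bool (kap q) + of_bool (kap (q - 1)) = (of_bool (kap (q div 4)) :: nat)"
proof -
  obtain s t where q: "q = 4*s + t" and t: "t < 4" by (metis mod_less_divisor div_mult_mod_eq mult.commute zero_less_numeral)
  have qd: "q div 4 = s" using q t by simp
  consider "t = 0" | "t = 1" | "t = 2" | "t = 3" using t by linarith
  then show ?thesis
  proof cases
    case 1
    then have "s \<ge> 1" using q assms by simp
    then have "q - 1 = 4*(s-1) + 3" using q 1 by simp
    then show ?thesis using q 1 qd kap_4[where s=s and r=0] kap_4[where s="s-1" and r=3] by simp
  next
    case 2 then show ?thesis using q qd kap_4[where s=s and r=1] kap_4[where s=s and r=0] by simp
  next
    case 3 then show ?thesis using q qd kap_4[where s=s and r=2] kap_4[where s=s and r=1] by simp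
  next
    case 4 then show ?thesis using q qd kap_4[where s=s and r=3] kap_4[where s=s and r=2] by simp
  qed
qed

definition cc :: "nat \<Rightarrow> bool" where "cc n = (n \<ge> 1 \<and> kap ((n+1) div 4))"

definition rr :: "nat \<Rightarrow> nat" where "rr n = (if n \<in> {1,2,5,6} then 1 else 0)"

definition tt :: "nat \<Rightarrow> nat \<Rightarrow> nat" where
  "tt n e = (if e \<le> n \<and> 4 dvd (n - e) then of_bool (cc ((n - e) div 4)) else 0)"


lemma kap1[simp]: "\<not> kap 1" using kap_4[where s=0 and r=1] by simp
lemma kap1'[simp]: "\<not> kap (Suc 0)" using kap1 by simp
lemma kap_step_bool: "q \<ge> 1 \<Longrightarrow> \<not> (kap q \<and> kap (q-1)) \<and> (kap (q div 4) \<longleftrightarrow> kap q \<or> kap (q - 1))"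
  using kap_step[of q] by (cases "kap q"; cases "kap (q-1)"; cases "kap (q div 4)"; simp)
lemma kap_odd: "kap (4*s+1) = False" "kap (4*s+3) = False" using kap_4[where s=s and r=1] kap_4[where s=s and r=3] by auto

lemma case3: "of_bool (cc (4*k+3)) + (if 4 \<le> 4*k+3 then of_bool (cc (4*k+3-4)) else 0)
     = rr (4*k+3) + tt (4*k+3) 3 + tt (4*k+3) 4 + tt (4*k+3) 5 + tt (4*k+3) 6"
proof -
  have "tt (4*k+3) 4 = 0" "tt (4*k+3) 5 = 0" "tt (4*k+3) 6 = 0" unfolding tt_def by presburger+
  moreover have "tt (4*k+3) 3 = of_bool (cc k)" unfolding tt_def by simp
  moreover have "rr (4*k+3) = 0" unfolding rr_def by (auto; presburger)
  moreover have "cc (4*k+3) = kap (k+1)" unfolding cc_def by simp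
  moreover have "cc (4*k+3-4) = (k \<ge> 1 \<and> kap k)" unfolding cc_def by (cases k) auto
  ultimately show ?thesis using kap_step[of "k+1"] by (cases k) (auto simp: cc_def)
qed

lemma tt_eq: "tt n e = (if e \<le> n \<and> n mod 4 = e mod 4 then of_bool (cc ((n-e) div 4)) else 0)"
  unfolding tt_def by (auto simp: mod_eq_dvd_iff_nat)

lemma cc_4k: "cc (4*k) = (k \<ge> 1 \<and> kap k)" "cc (4*k+1) = kap k" "cc (4*k+2) = kap k" "cc (4*k+3) = kap (k+1)"
proof -
  have "(4*k+1) div 4 = k" "(4*k+1+1) div 4 = k" "(4*k+2+1) div 4 = k" "(4*k+3+1) div 4 = k+1" by presburger+
  then show "cc (4*k) = (k \<ge> 1 \<and> kap k)" "cc (4*k+1) = kap k" "cc (4*k+2) = kap k" "cc (4*k+3) = kap (k+1)"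
    unfolding cc_def by auto
qed

lemma case0: "of_bool (cc (4*k)) + (if 4 \<le> 4*k then of_bool (cc (4*k-4)) else 0)
     = rr (4*k) + tt (4*k) 3 + tt (4*k) 4 + tt (4*k) 5 + tt (4*k) 6"
proof (cases "k \<ge> 2")
  case True
  have "4*k-4 = 4*(k-1)" by simp
  moreover have "rr (4*k) = 0" unfolding rr_def by (auto; presburger)
  moreover have "tt (4*k) 3 = 0" by (simp add: tt_eq; presburger)
  moreover have "tt (4*k) 5 = 0" by (simp add: tt_eq; presburger)
  moreover have "tt (4*k) 6 = 0" by (simp add: tt_eq; presburger)
  moreover have "tt (4*k) 4 = of_bool (cc (k-1))" proof -
    have "(4*k - 4) div 4 = k - 1" by presburger
    then show ?thesis unfolding tt_eq using True by simp
  qed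
  moreover have "cc (k-1) = kap (k div 4)" using True by (auto simp add: cc_def)
  ultimately show ?thesis using True kap_step_bool[of k] cc_4k[of k] cc_4k[of "k-1"] by auto
next
  case False
  then consider "k = 0" | "k = 1" by linarith
  then show ?thesis by cases (auto simp: rr_def tt_eq cc_def)
qed

lemma case1: "of_bool (cc (4*k+1)) + (if 4 \<le> 4*k+1 then of_bool (cc (4*k+1-4)) else 0)
     = rr (4*k+1) + tt (4*k+1) 3 + tt (4*k+1) 4 + tt (4*k+1) 5 + tt (4*k+1) 6"
proof (cases "k \<ge> 2")
  case True
  have "4*k+1-4 = 4*(k-1)+1" using True by simp
  moreover have "rr (4*k+1) = 0" unfolding rr_def using True by auto
  moreover have "tt (4*k+1) 3 = 0" by (simp add: tt_eq; presburger)
  moreover have "tt (4*k+1) 4 = 0" by (simp add: tt_eq; presburger)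
  moreover have "tt (4*k+1) 6 = 0" by (simp add: tt_eq; presburger)
  moreover have "tt (4*k+1) 5 = of_bool (cc (k-1))" proof -
    have "(4*k + 1 - 5) div 4 = k - 1" by presburger
    then show ?thesis unfolding tt_eq using True by simp
  qed
  moreover have "cc (k-1) = kap (k div 4)" using True by (auto simp add: cc_def)
  ultimately show ?thesis using True kap_step_bool[of k] cc_4k[of k] cc_4k[of "k-1"] by auto
next
  case False
  then consider "k = 0" | "k = 1" by linarith
  then show ?thesis by cases (auto simp: rr_def tt_eq cc_def)
qed
lemma case2: "of_bool (cc (4*k+2)) + (if 4 \<le> 4*k+2 then of_bool (cc (4*k+2-4)) else 0)
     = rr (4*k+2) + tt (4*k+2) 3 + tt (4*k+2) 4 + tt (4*k+2) 5 + tt (4*k+2) 6"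
proof (cases "k \<ge> 2")
  case True
  have "4*k+2-4 = 4*(k-1)+2" using True by simp
  moreover have "rr (4*k+2) = 0" unfolding rr_def using True by auto
  moreover have "tt (4*k+2) 3 = 0" by (simp add: tt_eq; presburger)
  moreover have "tt (4*k+2) 4 = 0" by (simp add: tt_eq; presburger)
  moreover have "tt (4*k+2) 5 = 0" by (simp add: tt_eq; presburger)
  moreover have "tt (4*k+2) 6 = of_bool (cc (k-1))" proof -
    have "(4*k + 2 - 6) div 4 = k - 1" "(4*k+2) mod 4 = (6::nat) mod 4" by presburger+
    then show ?thesis unfolding tt_eq using True by simp
  qed
  moreover have "cc (k-1) = kap (k div 4)" using True by (auto simp add: cc_def)
  ultimately show ?thesis using True kap_step_bool[of k] cc_4k[of k] cc_4k[of "k-1"] by auto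
next
  case False
  then consider "k = 0" | "k = 1" by linarith
  then show ?thesis by cases (auto simp: rr_def tt_eq cc_def)
qed

lemma cc_rel:
  "of_bool (cc n) + (if 4 \<le> n then of_bool (cc (n-4)) else 0)
     = rr n + tt n 3 + tt n 4 + tt n 5 + tt n 6"
proof -
  obtain k t where n: "n = 4*k + t" and t: "t < 4" by (metis mod_less_divisor div_mult_mod_eq mult.commute zero_less_numeral)
  consider "t = 0" | "t = 1" | "t = 2" | "t = 3" using t by linarith
  then show ?thesis
  proof cases
    case 1 then show ?thesis using case0[of k] by (simp only: n 1 add_0_right)
  next
    case 2 then show ?thesis using case1[of k] by (simp only: n 2 add_0_right)
  next
    case 3 then show ?thesis using case2[of k] by (simp only: n 3 add_0_right)
  next
    case 4 then show ?thesis using case3[of k] by (simp only: n 4 add_0_right)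
  qed
qed


lemma compX4_nth: "(f oo fps_X ^ 4) $ k = (if 4 dvd k then f $ (k div 4) else (0::'a::comm_ring_1))"
proof -
  have "(f oo fps_X ^ 4) $ k = (\<Sum>i=0..k. f $ i * (if k = 4*i then 1 else 0))"
    by (simp add: fps_compose_nth power_mult[symmetric])
  also have "\<dots> = (\<Sum>i\<in>(if 4 dvd k then {k div 4} else {}). f $ i)"
    by (rule sum.mono_neutral_cong_right) (auto split: if_splits)
  finally show ?thesis by auto
qed

definition ccf :: "'a::comm_ring_1 fps" where "ccf = Abs_fps (\<lambda>n. of_bool (cc n))"

lemma ccf_eq:
  "(1 + fps_X^4) * (ccf :: 'a::comm_ring_1 fps)
     = (fps_X + fps_X^2 + fps_X^5 + fps_X^6) + (fps_X^3 + fps_X^4 + fps_X^5 + fps_X^6) * (ccf oo fps_X ^ 4)"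
proof (rule fps_ext)
  fix n
  have E: "of_nat (of_bool (cc n) + (if 4 \<le> n then of_bool (cc (n-4)) else 0))
     = (of_nat (rr n + tt n 3 + tt n 4 + tt n 5 + tt n 6) :: 'a)" using cc_rel[of n] by simp
  have T: "of_nat (tt n e) = (if n < e then 0 else (ccf oo fps_X ^ 4) $ (n - e) :: 'a)" for e
    by (auto simp: tt_def compX4_nth ccf_def)
  have R: "of_nat (rr n) = (fps_X + fps_X^2 + fps_X^5 + fps_X^6 :: 'a fps) $ n"
    by (auto simp: rr_def)
  have L: "((1 + fps_X^4) * ccf) $ n = (of_nat (of_bool (cc n) + (if 4 \<le> n then of_bool (cc (n-4)) else 0)) :: 'a)"
    by (simp add: distrib_right fps_X_power_mult_nth ccf_def not_le)
  have R2: "((fps_X + fps_X^2 + fps_X^5 + fps_X^6) + (fps_X^3 + fps_X^4 + fps_X^5 + fps_X^6) * (ccf oo fps_X ^ 4) :: 'a fps) $ n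
     = of_nat (rr n) + of_nat (tt n 3) + of_nat (tt n 4) + of_nat (tt n 5) + of_nat (tt n 6)"
    unfolding T R by (simp add: distrib_right fps_X_power_mult_nth add.assoc)
  show "((1 + fps_X^4) * ccf) $ n = ((fps_X + fps_X^2 + fps_X^5 + fps_X^6) + (fps_X^3 + fps_X^4 + fps_X^5 + fps_X^6) * (ccf oo fps_X ^ 4) :: 'a fps) $ n"
    unfolding L R2 E by simp
qed


lemma aux: "(a + q*s)*u = a*u + (q*u)*(s::'a::comm_ring)" by (simp add: algebra_simps)

lemma funeq_ccf:
  "(ccf :: complex fps) = fps_X * (fps_X + 1)
           + (fps_X ^ 3 * (fps_X ^ 4 - 1) / ((fps_X - 1) * (fps_X ^ 4 + 1))) * (ccf oo fps_X ^ 4)"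
proof -
  let ?U = "(fps_X - 1) * (fps_X ^ 4 + 1) :: complex fps"
  let ?S = "(ccf :: complex fps) oo fps_X ^ 4"
  have U0: "?U $ 0 \<noteq> 0" by simp
  have Q: "(fps_X ^ 3 * (fps_X ^ 4 - 1) / ?U) * ?U = fps_X ^ 3 * (fps_X ^ 4 - 1)"
    using U0 by (simp add: fps_divide_unit mult.assoc inverse_mult_eq_1)
  have U: "?U \<noteq> 0" using U0 by (metis fps_zero_nth)
  have E: "(1 + fps_X^4) * (ccf :: complex fps)
     = (fps_X + fps_X^2 + fps_X^5 + fps_X^6) + (fps_X^3 + fps_X^4 + fps_X^5 + fps_X^6) * ?S"
    by (rule ccf_eq)
  have "ccf * ?U = (fps_X * (fps_X + 1)
           + (fps_X ^ 3 * (fps_X ^ 4 - 1) / ?U) * ?S) * ?U"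
  proof -
    have "ccf * ?U = (fps_X - 1) * ((1 + fps_X^4) * ccf)" by (simp add: algebra_simps)
    also have "\<dots> = (fps_X - 1) * ((fps_X + fps_X^2 + fps_X^5 + fps_X^6) + (fps_X^3 + fps_X^4 + fps_X^5 + fps_X^6) * ?S)"
      by (simp only: E)
    also have "\<dots> = fps_X * (fps_X + 1) * ?U + (fps_X ^ 3 * (fps_X ^ 4 - 1)) * ?S"
      by (simp add: algebra_simps power_def numeral_eq_Suc)
    also have "\<dots> = (fps_X * (fps_X + 1) + (fps_X ^ 3 * (fps_X ^ 4 - 1) / ?U) * ?S) * ?U"
      unfolding aux Q ..
    finally show ?thesis .
  qed
  then show ?thesis using U mult_right_cancel by blast
qed


lemma bit_add_self[simp]: "(x::bit) + x = 0" by (cases x) simp_all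

lemma two_bfps[simp]: "(2::bit fps) = 0" by (simp add: fps_eq_iff fps_numeral_nth)

lemma sum_sym_bit:
  fixes n :: nat
  assumes sym: "\<And>i. i \<le> n \<Longrightarrow> g i = g (n - i)"
  shows "(\<Sum>i=0..n. g i :: bit) = (if even n then g (n div 2) else 0)"
proof -
  define A where "A = {i::nat. 2*i < n}"
  define B where "B = {i::nat. n < 2*i \<and> i \<le> n}"
  define M where "M = {i::nat. 2*i = n}"
  have fin: "finite A" "finite B" "finite M" unfolding A_def B_def M_def
    by (auto intro: finite_subset[of _ "{..n}"])
  have un: "{0..n} = A \<union> B \<union> M" unfolding A_def B_def M_def by auto
  have d1: "(A \<union> B) \<inter> M = {}" "A \<inter> B = {}" unfolding A_def B_def M_def by auto
  have "(\<Sum>i=0..n. g i) = sum g (A \<union> B) + sum g M"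
    unfolding un using fin d1 by (intro sum.union_disjoint) auto
  also have "sum g (A \<union> B) = sum g A + sum g B"
    using fin d1 by (intro sum.union_disjoint) auto
  finally have "(\<Sum>i=0..n. g i) = sum g A + sum g B + sum g M" .
  moreover have "sum g B = sum g A"
  proof -
    have "sum g B = sum (\<lambda>i. g (n - i)) A"
      by (rule sum.reindex_bij_witness[of _ "\<lambda>i. n - i" "\<lambda>i. n - i"]) (auto simp: A_def B_def)
    also have "\<dots> = sum g A" by (rule sum.cong) (auto simp: A_def intro: sym[symmetric])
    finally show ?thesis .
  qed
  moreover have "sum g M = (if even n then g (n div 2) else 0)"
  proof -
    have "M = (if even n then {n div 2} else {})" unfolding M_def by auto
    then show ?thesis by simp
  qed
  ultimately show ?thesis by simp
qed

lemma frob_nth: "((f::bit fps)^2) $ n = (if even n then f $ (n div 2) else 0)"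
proof -
  have "((f::bit fps)^2) $ n = (\<Sum>i=0..n. f $ i * f $ (n - i))"
    by (simp add: power2_eq_square fps_mult_nth)
  also have "\<dots> = (if even n then f $ (n div 2) * f $ (n - n div 2) else 0)"
    by (rule sum_sym_bit) (simp add: mult.commute)
  also have "\<dots> = (if even n then f $ (n div 2) else 0)"
    by (cases "f $ (n div 2)") (auto elim!: evenE)
  finally show ?thesis .
qed

lemma compXk_nth: "k > 0 \<Longrightarrow> (f oo fps_X ^ k) $ n = (if k dvd n then f $ (n div k) else (0::'a::comm_ring_1))"
proof -
  assume k: "k > 0"
  have "(f oo fps_X ^ k) $ n = (\<Sum>i=0..n. f $ i * (if n = k*i then 1 else 0))"
    by (simp add: fps_compose_nth power_mult[symmetric] mult.commute)
  also have "\<dots> = (\<Sum>i\<in>(if k dvd n then {n div k} else {}). f $ i)"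
    using k by (intro sum.mono_neutral_cong_right) (auto split: if_splits simp: dvd_mult_div_cancel)
  finally show ?thesis by auto
qed

lemma frob2: "(f::bit fps)^2 = f oo fps_X^2"
  by (rule fps_ext) (simp add: frob_nth compXk_nth)

lemma frob4: "(f::bit fps)^4 = f oo fps_X^4"
proof (rule fps_ext)
  fix n
  have e: "(f::bit fps)^4 = (f^2)^2" by (simp flip: power_mult)
  have "((f^2)^2) $ n = (if even n then (f^2) $ (n div 2) else 0)" by (rule frob_nth)
  also have "\<dots> = (if even n then (if even (n div 2) then f $ (n div 2 div 2) else 0) else 0)"
    by (simp only: frob_nth)
  finally have "((f::bit fps)^4) $ n = (if even n then (if even (n div 2) then f $ (n div 2 div 2) else 0) else 0)"
    by (simp only: e)
  also have "\<dots> = (f oo fps_X^4) $ n"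
    by (simp add: compXk_nth) (auto elim!: evenE simp: div_mult2_eq[symmetric])
  finally show "((f::bit fps)^4) $ n = (f oo fps_X^4) $ n" .
qed

lemma bit_of_nat_mod2: "(of_nat (m mod 2) :: bit) = of_nat m"
proof -
  have "(of_nat m :: bit) = of_nat (m mod 2 + 2 * (m div 2))" by simp
  also have "\<dots> = of_nat (m mod 2)" by (simp only: of_nat_add of_nat_mult of_nat_numeral bit_numeral_even mult_zero_left add_0_right)
  finally show ?thesis ..
qed

lemma ptm_eq: "ptm n = of_nat (s2 n)" unfolding ptm_def bit_of_nat_mod2 ..

lemma s2_even: "s2 (2*k) = s2 k" by (subst s2.simps) auto
lemma s2_odd: "s2 (2*k+1) = 1 + s2 k" by (subst s2.simps) auto

lemma ptm_0: "ptm 0 = 0" by (simp add: ptm_eq)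
lemma ptm_even: "ptm (2*k) = ptm k" by (simp add: ptm_eq s2_even)
lemma ptm_odd: "ptm (2*k+1) = 1 + ptm k" by (simp add: ptm_eq s2_odd)

lemma F_eq: "F_ptm = Abs_fps ptm"
  unfolding F_ptm_def by (rule fps_ext) (simp add: ptm_0)

lemma X1: "(fps_X * (f :: 'a::comm_ring_1 fps)) $ n = (if n < 1 then 0 else f $ (n - 1))"
  using fps_X_power_mult_nth[of 1 f n] by simp

lemma F_lin: "(1 + fps_X^2) * F_ptm + (1 + fps_X + fps_X^2 + fps_X^3) * (F_ptm oo fps_X^2) + fps_X = 0"
proof (rule fps_ext)
  fix n :: nat
  let ?L = "(1 + fps_X^2) * F_ptm + (1 + fps_X + fps_X^2 + fps_X^3) * (F_ptm oo fps_X^2) + fps_X"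
  have L: "?L $ n = ptm n + (if n < 2 then 0 else ptm (n-2)) + (if even n then ptm (n div 2) else 0)
     + (if n < 1 then 0 else if even (n-1) then ptm ((n-1) div 2) else 0)
     + (if n < 2 then 0 else if even (n-2) then ptm ((n-2) div 2) else 0)
     + (if n < 3 then 0 else if even (n-3) then ptm ((n-3) div 2) else 0)
     + (if n = 1 then 1 else 0)"
  proof -
    have c: "(F_ptm oo fps_X^2) $ m = (if even m then ptm (m div 2) else 0)" for m
      by (simp add: compXk_nth F_eq)
    have f: "F_ptm $ m = ptm m" for m by (simp add: F_eq)
    have "?L $ n = F_ptm $ n + (fps_X^2 * F_ptm) $ n + (F_ptm oo fps_X^2) $ n + (fps_X * (F_ptm oo fps_X^2)) $ n
       + (fps_X^2 * (F_ptm oo fps_X^2)) $ n + (fps_X^3 * (F_ptm oo fps_X^2)) $ n + fps_X $ n"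
      by (simp only: distrib_right fps_add_nth mult_1 add.assoc)
    also have "\<dots> = ptm n + (if n < 2 then 0 else ptm (n-2)) + (if even n then ptm (n div 2) else 0)
     + (if n < 1 then 0 else if even (n-1) then ptm ((n-1) div 2) else 0)
     + (if n < 2 then 0 else if even (n-2) then ptm ((n-2) div 2) else 0)
     + (if n < 3 then 0 else if even (n-3) then ptm ((n-3) div 2) else 0)
     + (if n = 1 then 1 else 0)"
      by (simp only: fps_X_power_mult_nth X1 c f power_one_right fps_X_nth)
    finally show ?thesis .
  qed
  obtain k where "n = 2*k \<or> n = 2*k+1" by (metis dvd_mult_div_cancel oddE)
  then show "?L $ n = 0 $ n"
  proof
    assume n: "n = 2*k"
    show ?thesis
    proof (cases "k = 0")
      case True then show ?thesis using n L by (simp add: ptm_0)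
    next
      case False
      have c: "\<not> n < 2" "even n" "n div 2 = k" "\<not> n < 1" "odd (n-1)" "even (n-2)" "(n-2) div 2 = k - 1"
        "n - 2 = 2*(k-1)" "(if n < 3 then 0 else if even (n - 3) then ptm ((n - 3) div 2) else 0) = 0" "n \<noteq> 1"
        using False n by auto
      have "?L $ n = ptm k + ptm (k-1) + ptm k + ptm (k-1)"
        unfolding L c(9) using c by (simp add: ptm_even n)
      also have "\<dots> = 0" by (cases "ptm k"; cases "ptm (k-1)") simp_all
      finally show ?thesis by (simp only: fps_zero_nth)
    qed
  next
    assume n: "n = 2*k+1"
    show ?thesis
    proof (cases "k = 0")
      case True
      have p1: "ptm (Suc 0) = 1" using ptm_odd[of 0] ptm_0 by simp
      show ?thesis unfolding L using True n by (simp add: ptm_0 p1)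
    next
      case False
      have c: "\<not> n < 2" "odd n" "\<not> n < 1" "even (n-1)" "(n-1) div 2 = k" "odd (n-2)" "\<not> n < 3" "even (n-3)" "(n-3) div 2 = k - 1"
        "n - 2 = 2*(k-1)+1" "n \<noteq> 1"
        using False n by auto
      have e1: "ptm n = 1 + ptm k" using n ptm_odd[of k] by simp
      have e2: "ptm (n-2) = 1 + ptm (k-1)" unfolding c(10) by (rule ptm_odd)
      have "?L $ n = ptm n + ptm (n-2) + 0 + ptm ((n-1) div 2) + 0 + ptm ((n-3) div 2) + 0"
        unfolding L using c(1-4,6-8,11) by (simp only: if_True if_False)
      also have "\<dots> = (1 + ptm k) + (1 + ptm (k-1)) + ptm k + ptm (k-1)"
        unfolding e1 e2 c(5) c(9) by simp
      also have "\<dots> = 0" by (cases "ptm k"; cases "ptm (k-1)") simp_all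
      finally show ?thesis by (simp only: fps_zero_nth)
    qed
  qed
qed


lemma one_plus_X_sq: "(1 + fps_X :: bit fps)^2 = 1 + fps_X^2"
  by (simp add: power2_eq_square algebra_simps mult_2[symmetric])

lemma one_plus_X_cube: "(1 + fps_X :: bit fps)^3 = 1 + fps_X + fps_X^2 + fps_X^3"
proof -
  have "(1 + fps_X :: bit fps)^3 = (1 + fps_X^2) * (1 + fps_X)"
  proof -
    have "(1 + fps_X :: bit fps)^3 = (1 + fps_X)^2 * (1 + fps_X)" by (simp add: power2_eq_square power3_eq_cube)
    then show ?thesis by (simp only: one_plus_X_sq)
  qed
  also have "\<dots> = 1 + fps_X + fps_X^2 + fps_X^3"
    by (simp only: distrib_right distrib_left mult_1_left mult_1_right power3_eq_cube power2_eq_square add.assoc; simp only: ac_simps)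
  finally show ?thesis .
qed

lemma F_quad: "(1 + fps_X)^3 * F_ptm^2 + (1 + fps_X)^2 * F_ptm + fps_X = 0"
proof -
  have sw: "a + b + c = b + a + (c::bit fps)" for a b c by (simp add: add.commute)
  show ?thesis unfolding one_plus_X_sq one_plus_X_cube frob2[of F_ptm] sw[of "(1 + fps_X + fps_X^2 + fps_X^3) * (F_ptm oo fps_X^2)" "(1 + fps_X^2) * F_ptm" fps_X] by (rule F_lin)
qed

lemma F0: "F_ptm $ 0 = 0" by (simp add: F_eq ptm_0)
lemma ptm1: "ptm 1 = 1" using ptm_odd[of 0] ptm_0 by simp
lemma F1: "F_ptm $ 1 = 1" unfolding F_eq using ptm1 by simp
lemma G0: "G_ptm $ 0 = 0" by (simp add: G_ptm_def fps_inv_def)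

lemma FG: "F_ptm oo G_ptm = fps_X"
  unfolding G_ptm_def by (rule fps_inv_right) (simp_all only: F0 F1 One_nat_def[symmetric] one_neq_zero not_False_eq_True)

lemma G_cubic: "(1 + G_ptm)^3 * fps_X^2 + (1 + G_ptm)^2 * fps_X + G_ptm = 0"
proof -
  have "((1 + fps_X)^3 * F_ptm^2 + (1 + fps_X)^2 * F_ptm + fps_X) oo G_ptm = 0"
    by (simp add: F_quad)
  then show ?thesis
    by (simp only: fps_compose_add_distrib fps_compose_mult_distrib[OF G0] fps_compose_power[OF G0, symmetric]
          FG fps_compose_1 fps_X_fps_compose_startby0[OF G0])
qed

lemma ring_id:
  fixes x y :: "'a::comm_ring_1"
  shows "(1 + x^4) * y + (x + x^2 + x^5 + x^6) + (x^3 + x^4 + x^5 + x^6) * y^4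
   + 2 * (1 * x^1 * y^1 + 1 * x^1 * y^2 + 2 * x^2 * y^1 + 4 * x^2 * y^2 + 1 * x^2 * y^3 + 2 * x^3 * y^1 + 6 * x^3 * y^2 + 3 * x^3 * y^3 + 3 * x^4 * y^1 + 8 * x^4 * y^2 + 6 * x^4 * y^3 + 1 * x^4 * y^4 + 3 * x^5 * y^1 + 6 * x^5 * y^2 + 5 * x^5 * y^3 + 1 * x^5 * y^4 + 2 * x^6 * y^1 + 3 * x^6 * y^2 + 2 * x^6 * y^3)
   = ((1 + y)^3 * x^2 + (1 + y)^2 * x + y) * (x * (1 + x)^3 * y + (1 + x^4))"
  by (simp add: algebra_simps eval_nat_numeral)


lemma bfps_add_eq0: "(a::bit fps) + b = 0 \<Longrightarrow> a = b"
proof -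
  assume h: "a + b = 0"
  have bb: "b + b = 0" by (simp flip: mult_2)
  have "a = a + (b + b)" by (simp only: bb add_0_right)
  also have "\<dots> = (a + b) + b" by (simp only: add.assoc)
  also have "\<dots> = b" by (simp only: h add_0_left)
  finally show ?thesis .
qed

lemma G_eq: "(1 + fps_X^4) * G_ptm = (fps_X + fps_X^2 + fps_X^5 + fps_X^6) + (fps_X^3 + fps_X^4 + fps_X^5 + fps_X^6) * (G_ptm oo fps_X^4)"
proof -
  have "(1 + fps_X^4) * G_ptm + (fps_X + fps_X^2 + fps_X^5 + fps_X^6) + (fps_X^3 + fps_X^4 + fps_X^5 + fps_X^6) * G_ptm^4 = 0"
    using ring_id[of fps_X G_ptm] unfolding G_cubic two_bfps by simp
  then show ?thesis unfolding frob4[of G_ptm] add.assoc by (rule bfps_add_eq0)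
qed

lemma mahler_unique:
  fixes f g :: "'a::comm_ring_1 fps"
  assumes f: "(1 + fps_X^4) * f = P + (fps_X^3 + fps_X^4 + fps_X^5 + fps_X^6) * (f oo fps_X^4)"
      and g: "(1 + fps_X^4) * g = P + (fps_X^3 + fps_X^4 + fps_X^5 + fps_X^6) * (g oo fps_X^4)"
  shows "f = g"
proof -
  define h where "h = f - g"
  have H: "(1 + fps_X^4) * h = (fps_X^3 + fps_X^4 + fps_X^5 + fps_X^6) * (h oo fps_X^4)"
    unfolding h_def fps_compose_sub_distrib right_diff_distrib f g by simp
  have "h $ n = 0" for n
  proof (induction n rule: less_induct)
    case (less n)
    have c: "(h oo fps_X^4) $ m = 0" if "m < n" for m
    proof (cases "4 dvd m")
      case True
      have "m div 4 < n" using that by linarith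
      then show ?thesis using True less by (simp add: compXk_nth)
    qed (simp add: compXk_nth)
    have "((1 + fps_X^4) * h) $ n = h $ n + (if n < 4 then 0 else h $ (n - 4))"
      by (simp add: distrib_right fps_X_power_mult_nth)
    also have "(if n < 4 then 0 else h $ (n - 4)) = 0" using less by simp
    finally have L: "((1 + fps_X^4) * h) $ n = h $ n" by simp
    have "((fps_X^3 + fps_X^4 + fps_X^5 + fps_X^6) * (h oo fps_X^4)) $ n = 0"
      using less.IH[of 0] by (simp add: distrib_right fps_X_power_mult_nth c)
    then show ?case using H L by simp
  qed
  then have "h = 0" by (simp add: fps_eq_iff)
  then show ?thesis unfolding h_def by simp
qed

lemma G_ccf: "G_ptm = ccf"
  by (rule mahler_unique[OF G_eq ccf_eq])

lemma C_ccf: "C_ptm = ccf"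
proof (rule fps_ext)
  fix n
  have "G_ptm $ n = of_bool (cc n)" unfolding G_ccf ccf_def by simp
  moreover have "\<not> cc 0" by (simp add: cc_def)
  ultimately show "C_ptm $ n = ccf $ n"
    by (cases "cc n"; cases "n = 0") (auto simp: C_ptm_def c_ptm_def ccf_def)
qed


definition isp :: "complex fps \<Rightarrow> bool" where "isp f \<longleftrightarrow> (\<exists>p. f = fps_of_poly p)"
definition goodp :: "complex fps poly \<Rightarrow> bool" where "goodp P \<longleftrightarrow> (\<forall>i. isp (coeff P i))"

lemma isp_0[simp]: "isp 0" unfolding isp_def by (metis fps_of_poly_0)
lemma isp_1[simp]: "isp 1" unfolding isp_def by (metis fps_of_poly_1)
lemma isp_X[simp]: "isp fps_X" unfolding isp_def by (metis fps_of_poly_fps_X)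
lemma isp_add[simp]: "isp a \<Longrightarrow> isp b \<Longrightarrow> isp (a + b)" unfolding isp_def by (metis fps_of_poly_add)
lemma isp_mult[simp]: "isp a \<Longrightarrow> isp b \<Longrightarrow> isp (a * b)" unfolding isp_def by (metis fps_of_poly_mult)
lemma isp_uminus[simp]: "isp a \<Longrightarrow> isp (- a)" unfolding isp_def by (metis fps_of_poly_uminus)
lemma isp_diff[simp]: "isp a \<Longrightarrow> isp b \<Longrightarrow> isp (a - b)" unfolding isp_def by (metis fps_of_poly_diff)
lemma isp_power[simp]: "isp a \<Longrightarrow> isp (a ^ n)" by (induction n) auto
lemma isp_sum: "(\<And>i. i \<in> A \<Longrightarrow> isp (f i)) \<Longrightarrow> isp (sum f A)"
  by (induction A rule: infinite_finite_induct) auto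

lemma goodp_0[simp]: "goodp 0" unfolding goodp_def by simp
lemma goodp_pCons[simp]: "goodp (pCons a p) \<longleftrightarrow> isp a \<and> goodp p"
  unfolding goodp_def by (auto simp: coeff_pCons split: nat.splits)
lemma goodp_add[simp]: "goodp p \<Longrightarrow> goodp q \<Longrightarrow> goodp (p + q)" unfolding goodp_def by simp
lemma goodp_diff[simp]: "goodp p \<Longrightarrow> goodp q \<Longrightarrow> goodp (p - q)" unfolding goodp_def by simp
lemma goodp_mult[simp]: "goodp p \<Longrightarrow> goodp q \<Longrightarrow> goodp (p * q)"
  unfolding goodp_def coeff_mult by (auto intro!: isp_sum)
lemma goodp_smult[simp]: "isp a \<Longrightarrow> goodp q \<Longrightarrow> goodp (smult a q)"
  unfolding goodp_def by simp
lemma goodp_const[simp]: "isp a \<Longrightarrow> goodp [:a:]" by simp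
lemma goodp_pcompose: "goodp p \<Longrightarrow> goodp q \<Longrightarrow> goodp (pcompose p q)"
  by (induction p rule: pCons_induct) (auto simp: pcompose_pCons)
lemma goodp_monom[simp]: "isp a \<Longrightarrow> goodp (monom a n)"
  unfolding goodp_def by (simp add: coeff_monom)
lemma goodp_sum: "(\<And>i. i \<in> A \<Longrightarrow> goodp (f i)) \<Longrightarrow> goodp (sum f A)"
  by (induction A rule: infinite_finite_induct) auto

definition HH :: "complex fps" where "HH = 1 + fps_X + fps_X * C_ptm"

lemma poly_sum_le: "degree (p :: 'a::comm_semiring_1 poly) \<le> n \<Longrightarrow> poly p x = (\<Sum>i\<le>n. coeff p i * x ^ i)"
proof -
  assume "degree p \<le> n"
  then have "(\<Sum>i\<le>n. coeff p i * x ^ i) = (\<Sum>i\<le>degree p. coeff p i * x ^ i)"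
    by (intro sum.mono_neutral_right) (auto simp: coeff_eq_0)
  then show ?thesis unfolding poly_altdef[of p x] by (rule sym)
qed

lemma alg_C:
  assumes "fps_algebraic_over_rat_funs C_ptm"
  shows "\<exists>P. P \<noteq> 0 \<and> goodp P \<and> poly P C_ptm = 0"
proof -
  obtain p :: "complex poly poly" where p: "p \<noteq> 0" "poly (map_poly fps_of_poly p) C_ptm = 0"
    using assms unfolding fps_algebraic_over_rat_funs_def by blast
  have "map_poly fps_of_poly p \<noteq> 0"
    using p(1) by (metis fps_of_poly_eq_iff fps_of_poly_0 leading_coeff_0_iff lead_coeff_map_poly_nz)
  moreover have "goodp (map_poly fps_of_poly p)"
    unfolding goodp_def isp_def by (auto simp: coeff_map_poly)
  ultimately show ?thesis using p(2) by blast
qed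

lemma alg_H:
  assumes "\<exists>P. P \<noteq> 0 \<and> goodp P \<and> poly P C_ptm = 0"
  shows "\<exists>P. P \<noteq> 0 \<and> goodp P \<and> poly P HH = 0"
proof -
  obtain P where P: "P \<noteq> 0" "goodp P" "poly P C_ptm = 0" using assms by blast
  define d where "d = degree P"
  define R where "R = (\<Sum>i\<le>d. monom (coeff P i * fps_X ^ (d - i)) i)"
  have cR: "coeff R n = (if n \<le> d then coeff P n * fps_X ^ (d - n) else 0)" for n
    unfolding R_def by (simp add: coeff_sum coeff_monom)
  have R0: "R \<noteq> 0"
  proof
    assume "R = 0"
    then have "coeff R d = 0" by simp
    then show False using P(1) by (simp add: cR d_def)
  qed
  have gR: "goodp R" unfolding goodp_def cR using P(2) unfolding goodp_def by simp
  have "poly R (fps_X * C_ptm) = (\<Sum>i\<le>d. coeff P i * fps_X ^ (d - i) * (fps_X * C_ptm) ^ i)"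
    unfolding R_def poly_sum poly_monom ..
  also have "\<dots> = (\<Sum>i\<le>d. fps_X ^ d * (coeff P i * C_ptm ^ i))"
    by (rule sum.cong) (auto simp: power_mult_distrib algebra_simps power_add[symmetric])
  also have "\<dots> = fps_X ^ d * poly P C_ptm"
    by (simp add: poly_sum_le[of P d] d_def sum_distrib_left)
  finally have PR: "poly R (fps_X * C_ptm) = 0" using P(3) by simp
  define Q where "Q = pcompose R [:- (1 + fps_X), 1:]"
  have "poly Q HH = 0" unfolding Q_def poly_pcompose HH_def using PR by simp
  moreover have "Q \<noteq> 0" unfolding Q_def using R0 pcompose_eq_0 by fastforce
  moreover have "goodp Q" unfolding Q_def by (rule goodp_pcompose[OF gR]) simp
  ultimately show ?thesis by blast
qed


lemma HH_comp: "HH oo fps_X^4 = 1 + fps_X^4 + fps_X^4 * (C_ptm oo fps_X^4)"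
proof -
  have z: "(fps_X^4 :: complex fps) $ 0 = 0" by simp
  show ?thesis unfolding HH_def
    by (simp only: fps_compose_add_distrib fps_compose_mult_distrib[OF z] fps_compose_1
          fps_X_fps_compose_startby0[OF z])
qed

lemma ring_H:
  fixes x c s :: "'a::comm_ring_1"
  assumes E: "(1 + x^4) * c = (x + x^2 + x^5 + x^6) + (x^3 + x^4 + x^5 + x^6) * s"
  shows "(1 + x^4) * (1 + x + x * c) = (1 + x + x^2 + x^3) * (1 + x^4 + x^4 * s)"
proof -
  have "(1 + x^4) * (1 + x + x * c) = (1 + x^4) * (1 + x) + x * ((1 + x^4) * c)"
    by (simp add: algebra_simps)
  also have "\<dots> = (1 + x^4) * (1 + x) + x * ((x + x^2 + x^5 + x^6) + (x^3 + x^4 + x^5 + x^6) * s)"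
    by (simp only: E)
  also have "\<dots> = (1 + x + x^2 + x^3) * (1 + x^4 + x^4 * s)"
    by (simp add: algebra_simps eval_nat_numeral)
  finally show ?thesis .
qed

lemma HH_rel: "(1 + fps_X^4) * HH = (1 + fps_X + fps_X^2 + fps_X^3) * (HH oo fps_X^4)"
  unfolding HH_comp unfolding HH_def
  by (rule ring_H) (simp only: C_ccf ccf_eq)

lemma HH_nz: "HH \<noteq> 0"
proof
  assume "HH = 0"
  then have "HH $ 0 = 0" by simp
  then show False by (simp add: HH_def)
qed

abbreviation sig :: "complex fps \<Rightarrow> complex fps" where "sig f \<equiv> f oo fps_X^4"

lemma poly_sig: "poly (map_poly sig P) (sig y) = sig (poly P y)"
proof (induction P rule: pCons_induct)
  case 0 then show ?case by simp
next
  case (pCons a p)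
  have z: "(fps_X^4 :: complex fps) $ 0 = 0" by simp
  show ?case
    by (simp add: map_poly_pCons fps_compose_add_distrib fps_compose_mult_distrib[OF z] pCons.IH)
qed

lemma isp_sig: "isp f \<Longrightarrow> isp (sig f)"
  unfolding isp_def by (metis fps_of_poly_pcompose fps_of_poly_monom' coeff_monom zero_neq_numeral)


definition Ap :: "complex poly" where "Ap = [:1,0,0,0,1:]"
definition Bp :: "complex poly" where "Bp = [:1,1,1,1:]"
abbreviation X4p :: "complex poly" where "X4p \<equiv> monom 1 4"

lemma fA: "fps_of_poly Ap = 1 + fps_X^4"
  by (rule fps_ext) (auto simp: Ap_def coeff_pCons split: nat.splits)
lemma fB: "fps_of_poly Bp = 1 + fps_X + fps_X^2 + fps_X^3"
  by (rule fps_ext) (auto simp: Bp_def coeff_pCons split: nat.splits)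

lemma fsig: "fps_of_poly (pcompose u X4p) = sig (fps_of_poly u)"
  by (simp add: fps_of_poly_pcompose fps_of_poly_monom')

lemma key_identity:
  assumes "\<exists>P. P \<noteq> 0 \<and> goodp P \<and> poly P HH = 0"
  shows "\<exists>u0 ud d. u0 \<noteq> 0 \<and> ud \<noteq> 0 \<and> d > 0 \<and>
     pcompose ud X4p * Ap ^ d * u0 = ud * pcompose u0 X4p * Bp ^ d"
proof -
  define Good where "Good = (\<lambda>d. \<exists>P. P \<noteq> 0 \<and> goodp P \<and> poly P HH = 0 \<and> degree P = d)"
  have "\<exists>d. Good d" using assms unfolding Good_def by blast
  then obtain d where Gd: "Good d" and least: "\<And>e. Good e \<Longrightarrow> d \<le> e"
    by (metis LeastI Least_le)
  obtain P where P: "P \<noteq> 0" "goodp P" "poly P HH = 0" "degree P = d"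
    using Gd unfolding Good_def by blast
  have d0: "d > 0"
  proof (rule ccontr)
    assume "\<not> d > 0"
    then have "degree P = 0" using P(4) by simp
    then obtain c where "P = [:c:]" by (metis degree_eq_zeroE)
    then show False using P(1,3) by simp
  qed
  have p0: "coeff P 0 \<noteq> 0"
  proof
    assume c0: "coeff P 0 = 0"
    obtain a q where Pq: "P = pCons a q" by (cases P)
    have a0: "a = 0" using c0 Pq by simp
    have q0: "q \<noteq> 0" using P(1) Pq a0 by auto
    have "HH * poly q HH = 0" using P(3) Pq a0 by simp
    then have "poly q HH = 0" using HH_nz by simp
    moreover have "goodp q" using P(2) Pq by simp
    moreover have "degree q < d" using P(4) Pq q0 by simp
    ultimately show False using least[of "degree q"] q0 unfolding Good_def by fastforce
  qed
  define p where "p = coeff P"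
  define A where "A = (1 + fps_X^4 :: complex fps)"
  define B where "B = (1 + fps_X + fps_X^2 + fps_X^3 :: complex fps)"
  have pd: "p d \<noteq> 0" using P(1,4) unfolding p_def by (metis leading_coeff_0_iff)
  have HR: "A * HH = B * sig HH" unfolding A_def B_def by (rule HH_rel)
  have "poly (map_poly sig P) (sig HH) = 0" unfolding poly_sig P(3) by simp
  then have S1: "(\<Sum>i\<le>d. sig (p i) * sig HH ^ i) = 0"
    using poly_sum_le[of "map_poly sig P" d "sig HH"] map_poly_degree_leq[of sig P] P(4)
    by (simp add: coeff_map_poly p_def)
  define R where "R = (\<Sum>i\<le>d. monom (sig (p i) * B ^ (d - i) * A ^ i) i)"
  have cR: "coeff R n = (if n \<le> d then sig (p n) * B ^ (d - n) * A ^ n else 0)" for n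
    unfolding R_def by (simp add: coeff_sum coeff_monom)
  have "poly R HH = (\<Sum>i\<le>d. sig (p i) * B ^ (d - i) * A ^ i * HH ^ i)"
    unfolding R_def poly_sum poly_monom ..
  also have "\<dots> = (\<Sum>i\<le>d. B ^ d * (sig (p i) * sig HH ^ i))"
  proof (rule sum.cong)
    fix i assume "i \<in> {..d}"
    then have i: "i \<le> d" by simp
    have "sig (p i) * B ^ (d - i) * A ^ i * HH ^ i = sig (p i) * B ^ (d - i) * (A * HH) ^ i"
      by (simp add: power_mult_distrib)
    also have "\<dots> = sig (p i) * (B ^ (d - i) * B ^ i) * sig HH ^ i"
      unfolding HR by (simp add: power_mult_distrib algebra_simps)
    also have "B ^ (d - i) * B ^ i = B ^ d" using i by (simp flip: power_add)
    finally show "sig (p i) * B ^ (d - i) * A ^ i * HH ^ i = B ^ d * (sig (p i) * sig HH ^ i)"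
      by (simp add: algebra_simps)
  qed simp
  also have "\<dots> = 0" unfolding sum_distrib_left[symmetric] S1 by simp
  finally have RH: "poly R HH = 0" .
  define S where "S = smult (sig (p d) * A ^ d) P - smult (p d) R"
  have SH: "poly S HH = 0" unfolding S_def using RH P(3) by simp
  have cS: "coeff S n = sig (p d) * A ^ d * p n - p d * (if n \<le> d then sig (p n) * B ^ (d - n) * A ^ n else 0)" for n
    unfolding S_def by (simp add: cR p_def)
  have ispA: "isp A" "isp B" unfolding A_def B_def by simp_all
  have ispp: "isp (p n)" for n using P(2) unfolding goodp_def p_def by simp
  have gS: "goodp S" unfolding goodp_def cS using ispA ispp by (simp add: isp_sig)
  have S0: "S = 0"
  proof (rule ccontr)
    assume Sn: "S \<noteq> 0"
    have "degree S \<le> d - 1"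
    proof (rule degree_le, intro allI impI)
      fix n assume "d - 1 < n"
      then have "n \<ge> d" using d0 by simp
      then show "coeff S n = 0"
      proof (cases "n = d")
        case True then show ?thesis unfolding cS by (simp add: algebra_simps)
      next
        case False
        with \<open>n \<ge> d\<close> have "n > d" by simp
        then have "p n = 0" unfolding p_def using P(4) by (simp add: coeff_eq_0)
        then show ?thesis unfolding cS using \<open>n > d\<close> by simp
      qed
    qed
    then have "degree S < d" using d0 by simp
    then show False using least[of "degree S"] Sn gS SH unfolding Good_def by fastforce
  qed
  then have "coeff S 0 = 0" by simp
  then have E: "sig (p d) * A ^ d * p 0 = p d * (sig (p 0) * B ^ d)" unfolding cS by simp
  obtain u0 where u0: "p 0 = fps_of_poly u0" using ispp[of 0] unfolding isp_def by blast
  obtain ud where ud: "p d = fps_of_poly ud" using ispp[of d] unfolding isp_def by blast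
  have "fps_of_poly (pcompose ud X4p * Ap ^ d * u0) = fps_of_poly (ud * pcompose u0 X4p * Bp ^ d)"
    using E unfolding fps_of_poly_mult fps_of_poly_power fsig fA fB u0 ud A_def B_def
    by (simp add: algebra_simps)
  then have "pcompose ud X4p * Ap ^ d * u0 = ud * pcompose u0 X4p * Bp ^ d"
    by (simp only: fps_of_poly_eq_iff)
  moreover have "u0 \<noteq> 0" using p0 u0 p_def by auto
  moreover have "ud \<noteq> 0" using pd ud by auto
  ultimately show ?thesis using d0 by blast
qed


lemma fact4: "X4p - [:(z::complex)^4:] = [:-z,1:] * [:z^3, z^2, z, 1:]"
  by (simp add: monom_altdef algebra_simps eval_nat_numeral)

lemma fact4_poly: "poly [:z^3, z^2, z, 1:] z = 4 * (z::complex)^3"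
  by (simp add: algebra_simps eval_nat_numeral)

lemma order_X4: "z \<noteq> 0 \<Longrightarrow> order z (X4p - [:z^4:]) = 1"
proof -
  assume z: "z \<noteq> 0"
  have nz: "poly [:z^3, z^2, z, 1:] z \<noteq> 0" unfolding fact4_poly using z by simp
  then have r0: "[:z^3, z^2, z, 1:] \<noteq> 0" by auto
  have "order z ([:-z,1:] * [:z^3, z^2, z, 1:]) = order z [:-z,1:] + order z [:z^3, z^2, z, 1:]"
    using r0 by (intro order_mult) simp
  also have "order z [:-z,1:] = 1" using order_power_n_n[of z 1] by simp
  also have "order z [:z^3, z^2, z, 1:] = 0" using nz by (rule order_0I)
  finally show ?thesis unfolding fact4 by simp
qed

lemma order_power: "p \<noteq> 0 \<Longrightarrow> order z (p ^ n) = n * order z p"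
  by (induction n) (auto simp: order_mult order_1_eq_0)

lemma pcompose_pow: "pcompose (p ^ n) r = (pcompose p r) ^ n"
  by (induction n) (simp_all add: pcompose_mult one_pCons)

lemma order_pcomp:
  assumes z: "z \<noteq> 0" and p: "p \<noteq> 0"
  shows "order z (pcompose p X4p) = order (z^4) p"
proof -
  define w where "w = z^4"
  define k where "k = order w p"
  obtain q where q: "p = [:-w,1:] ^ k * q" "\<not> [:-w,1:] dvd q"
    using order_decomp[OF p] unfolding k_def by blast
  have qw: "poly q w \<noteq> 0" using q(2) by (simp add: poly_eq_0_iff_dvd)
  define r where "r = [:z^3, z^2, z, 1:]"
  have lin: "pcompose [:-w,1:] X4p = [:-z,1:] * r"
    unfolding r_def w_def fact4[symmetric] by (simp add: pcompose_pCons monom_altdef algebra_simps)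
  have "pcompose p X4p = [:-z,1:] ^ k * (r ^ k * pcompose q X4p)"
    by (simp only: q(1) pcompose_mult pcompose_pow lin power_mult_distrib mult.assoc)
  moreover have nz: "poly (r ^ k * pcompose q X4p) z \<noteq> 0"
  proof -
    have pr: "poly r z = 4 * z^3" unfolding r_def by (rule fact4_poly)
    have "poly (r ^ k * pcompose q X4p) z = (4 * z^3) ^ k * poly q w"
      by (simp add: poly_pcompose poly_monom pr w_def)
    then show ?thesis using qw z by simp
  qed
  moreover have "r ^ k * pcompose q X4p \<noteq> 0" using nz by auto
  ultimately have "order z (pcompose p X4p) = order z ([:-z,1:] ^ k) + order z (r ^ k * pcompose q X4p)"
    by (simp add: order_mult)
  also have "\<dots> = k" using nz by (simp add: order_power_n_n order_0I)
  finally show ?thesis unfolding k_def w_def .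
qed


lemma Ap_eq: "Ap = X4p - [:(- 1)^4 * (-1):]"
  by (rule poly_eqI) (simp add: Ap_def coeff_monom coeff_pCons split: nat.split)

lemma Ap_X4: "Ap = X4p + 1"
  by (rule poly_eqI) (simp add: Ap_def coeff_monom coeff_pCons split: nat.split)

lemma Bp_X4: "Bp * [:-1,1:] = X4p - [:1:]"
  by (rule poly_eqI) (simp add: Bp_def coeff_monom coeff_pCons split: nat.split)

lemma poly_Ap: "poly Ap z = z^4 + 1" by (simp add: Ap_X4 poly_monom)

lemma Ap_nz: "Ap \<noteq> 0" by (simp add: Ap_def)
lemma Bp_nz: "Bp \<noteq> 0" by (simp add: Bp_def)

lemma orderA: "z \<noteq> 0 \<Longrightarrow> order z Ap = (if z^4 = -1 then 1 else 0)"
proof -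
  assume z: "z \<noteq> 0"
  show ?thesis
  proof (cases "z^4 = -1")
    case True
    have "Ap = X4p - [:z^4:]" unfolding True Ap_X4 by (simp add: one_pCons)
    then show ?thesis using order_X4[OF z] True by simp
  next
    case False
    then have "poly Ap z \<noteq> 0" unfolding poly_Ap by (auto simp: eq_neg_iff_add_eq_0)
    then show ?thesis using False by (simp add: order_0I)
  qed
qed

lemma orderB: "z \<noteq> 0 \<Longrightarrow> order z Bp = (if z^4 = 1 \<and> z \<noteq> 1 then 1 else 0)"
proof -
  assume z: "z \<noteq> 0"
  have pB: "poly Bp z * (z - 1) = z^4 - 1"
    using arg_cong[OF Bp_X4, of "\<lambda>p. poly p z"] by (simp add: poly_monom algebra_simps)
  show ?thesis
  proof (cases "z^4 = 1 \<and> z \<noteq> 1")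
    case True
    have "order z (Bp * [:-1,1:]) = order z Bp + order z [:-1,1:]"
    proof (rule order_mult)
      have "[:-1,1:] \<noteq> (0::complex poly)" by simp
      then show "Bp * [:-1,1:] \<noteq> 0" using Bp_nz by (simp only: mult_eq_0_iff) simp
    qed
    also have "order z [:-1,1:] = 0" using True by (intro order_0I) simp
    also have "Bp * [:-1,1:] = X4p - [:z^4:]" using True Bp_X4 by simp
    finally show ?thesis using order_X4[OF z] True by simp
  next
    case False
    have "poly Bp z \<noteq> 0"
    proof (cases "z = 1")
      case True then show ?thesis by (simp add: Bp_def)
    next
      case False
      with \<open>\<not> (z^4 = 1 \<and> z \<noteq> 1)\<close> have "z^4 - 1 \<noteq> 0" by simp
      then show ?thesis using pB by auto
    qed
    then show ?thesis using False by (simp add: order_0I)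
  qed
qed


lemma pcomp_nz: "p \<noteq> 0 \<Longrightarrow> pcompose p X4p \<noteq> 0"
  using pcompose_eq_0[of p X4p] by (auto simp: degree_monom_eq)

lemma i4: "\<i> ^ (4 * m) = 1" by (simp add: power_mult)

lemma final_contra:
  fixes u0 ud :: "complex poly" and d :: nat
  assumes u0: "u0 \<noteq> 0" and ud: "ud \<noteq> 0" and d0: "d > 0"
      and I: "pcompose ud X4p * Ap ^ d * u0 = ud * pcompose u0 X4p * Bp ^ d"
  shows False
proof -
  define f where "f z = int (order z u0) - int (order z ud)" for z
  have rel: "f z = f (z^4) + int d * (int (order z Bp) - int (order z Ap))" if z: "z \<noteq> 0" for z
  proof -
    have n1: "pcompose ud X4p * Ap ^ d \<noteq> 0" using pcomp_nz[OF ud] Ap_nz by simp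
    have n2: "ud * pcompose u0 X4p \<noteq> 0" using pcomp_nz[OF u0] ud by simp
    have L: "order z (pcompose ud X4p * Ap ^ d * u0) = order (z^4) ud + d * order z Ap + order z u0"
      using n1 u0 Ap_nz by (simp add: order_mult order_power order_pcomp[OF z ud])
    have R: "order z (ud * pcompose u0 X4p * Bp ^ d) = order z ud + order (z^4) u0 + d * order z Bp"
      using n2 Bp_nz by (simp add: order_mult order_power order_pcomp[OF z u0])
    have "order (z^4) ud + d * order z Ap + order z u0 = order z ud + order (z^4) u0 + d * order z Bp"
      using L R I by simp
    then have "int (order (z^4) ud) + int d * int (order z Ap) + int (order z u0)
      = int (order z ud) + int (order (z^4) u0) + int d * int (order z Bp)" by (simp flip: of_nat_mult of_nat_add)
    then show ?thesis unfolding f_def by (simp add: algebra_simps)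
  qed
  have fin: "finite {x. poly (u0 * ud) x = 0}" using u0 ud by (intro poly_roots_finite) simp
  have chain: "f w = 0" if M: "M > 0" and wM: "w ^ M = \<i>" for w M
  proof (rule ccontr)
    assume fw: "f w \<noteq> 0"
    define u where "u = rec_nat w (\<lambda>_ v. csqrt (csqrt v))"
    have u0': "u 0 = w" and uS: "u (Suc k) = csqrt (csqrt (u k))" for k unfolding u_def by simp_all
    have u4: "u (Suc k) ^ 4 = u k" for k
    proof -
      have "u (Suc k) ^ 4 = ((csqrt (csqrt (u k)))^2)^2" unfolding uS by (simp only: power_mult[symmetric]) simp
      also have "\<dots> = u k" by (simp only: power2_csqrt)
      finally show ?thesis .
    qed
    have pw: "u k ^ (M * 4 ^ k) = \<i>" for k
    proof (induction k)
      case 0 then show ?case using wM u0' by simp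
    next
      case (Suc k)
      have "u (Suc k) ^ (M * 4 ^ Suc k) = (u (Suc k) ^ 4) ^ (M * 4 ^ k)"
        by (simp add: power_mult[symmetric] algebra_simps)
      then show ?case using Suc u4 by simp
    qed
    have nz: "u k \<noteq> 0" for k
    proof
      assume "u k = 0"
      then have "(0::complex) ^ (M * 4^k) = \<i>" using pw[of k] by simp
      moreover have "M * 4^k > 0" using M by simp
      then have "(0::complex) ^ (M * 4^k) = 0" by (simp add: power_0_left)
      ultimately show False by simp
    qed
    have not1: "u k \<noteq> 1" for k using pw[of k] by auto
    have notm1: "u k \<noteq> -1" for k
    proof
      assume "u k = -1"
      then have "(-1::complex) ^ (M * 4 ^ k) = \<i>" using pw[of k] by simp
      then show False by (cases "even (M * 4 ^ k)") (simp_all add: complex_eq_iff)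
    qed
    have step: "f (u (Suc k)) = f (u k)" for k
    proof -
      have "order (u (Suc k)) Ap = 0" using orderA[OF nz[of "Suc k"]] u4[of k] notm1[of k] by simp
      moreover have "order (u (Suc k)) Bp = 0" using orderB[OF nz[of "Suc k"]] u4[of k] not1[of k] by simp
      ultimately show ?thesis using rel[OF nz[of "Suc k"]] u4[of k] by simp
    qed
    have fu: "f (u k) = f w" for k by (induction k) (simp_all add: step u0')
    have root: "poly (u0 * ud) (u k) = 0" for k
    proof -
      have "order (u k) u0 \<noteq> 0 \<or> order (u k) ud \<noteq> 0" using fu[of k] fw unfolding f_def by auto
      then show ?thesis using u0 ud by (auto simp: order_root)
    qed
    have inj: "inj u"
    proof (rule injI)
      fix j k assume ujk: "u j = u k"
      show "j = k"
      proof (rule ccontr)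
        assume "j \<noteq> k"
        then consider "j < k" | "k < j" by linarith
        then show False
        proof cases
          case 1
          have "u j ^ (M * 4 ^ k) = (u j ^ (M * 4 ^ j)) ^ (4 ^ (k - j))"
            using 1 by (simp add: power_mult[symmetric] power_add[symmetric] mult.assoc)
          also have "\<dots> = 1" unfolding pw using 1 by (metis i4 Suc_diff_Suc power_Suc)
          finally show False using pw[of k] ujk by simp
        next
          case 2
          have "u k ^ (M * 4 ^ j) = (u k ^ (M * 4 ^ k)) ^ (4 ^ (j - k))"
            using 2 by (simp add: power_mult[symmetric] power_add[symmetric] mult.assoc)
          also have "\<dots> = 1" unfolding pw using 2 by (metis i4 Suc_diff_Suc power_Suc)
          finally show False using pw[of j] ujk by simp
        qed
      qed
    qed
    have "range u \<subseteq> {x. poly (u0 * ud) x = 0}" using root by auto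
    then have "finite (range u)" using fin finite_subset by blast
    then show False using inj finite_imageD infinite_UNIV_nat by blast
  qed
  define z where "z = csqrt \<i>"
  have z2: "z^2 = \<i>" unfolding z_def by (rule power2_csqrt)
  have z4: "z^4 = -1" using z2 by (metis power_mult[of z 2 2] i_squared mult_2 numeral_Bit0 power2_eq_square numeral_2_eq_2)
  have znz: "z \<noteq> 0" using z2 by auto
  have fi: "f \<i> = 0" using chain[of 1 \<i>] by simp
  have fz: "f z = 0" using chain[of 2 z] z2 by simp
  have ri: "f \<i> = f 1 + int d"
    using rel[of \<i>] orderA[of \<i>] orderB[of \<i>] by (simp add: power_mult[symmetric])
  have rm: "f (-1) = f 1 + int d"
    using rel[of "-1"] orderA[of "-1"] orderB[of "-1"] by simp
  have rz: "f z = f (-1) - int d"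
    using rel[OF znz] orderA[OF znz] orderB[OF znz] z4 by simp
  show False using fi fz ri rm rz d0 by simp
qed


theorem mainTheorem3:
  shows "C_ptm = fps_X * (fps_X + 1)
           + (fps_X ^ 3 * (fps_X ^ 4 - 1) / ((fps_X - 1) * (fps_X ^ 4 + 1))) * (C_ptm oo fps_X ^ 4)
         \<and> \<not> fps_algebraic_over_rat_funs C_ptm"
proof
  show "C_ptm = fps_X * (fps_X + 1)
           + (fps_X ^ 3 * (fps_X ^ 4 - 1) / ((fps_X - 1) * (fps_X ^ 4 + 1))) * (C_ptm oo fps_X ^ 4)"
    unfolding C_ccf by (rule funeq_ccf)
  show "\<not> fps_algebraic_over_rat_funs C_ptm"
  proof
    assume "fps_algebraic_over_rat_funs C_ptm"
    then obtain u0 ud d where "u0 \<noteq> 0" "ud \<noteq> 0" "d > 0"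
      "pcompose ud X4p * Ap ^ d * u0 = ud * pcompose u0 X4p * Bp ^ d"
      using key_identity[OF alg_H[OF alg_C]] by blast
    then show False by (rule final_contra)
  qed
qed

end
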